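(* Let $\mathfrak S$ be a commutative semiring and $\sigma_{\mathfrak S}$ a set of ideals of $\mathfrak S$ with the ideal topology. Then $\sigma_{\mathfrak S}$ is sober if and only if, for every ideal $\mathfrak a$ of $\mathfrak S$ such that the subbasic closed set $\mathfrak a^{\uparrow}$ is non-empty and irreducible, one has $\bigcap\{\mathfrak x\in\sigma_{\mathfrak S}\mid \mathfrak a\subseteq\mathfrak x\}\in\sigma_{\mathfrak S}$.
   Context: A semiring $(\mathfrak S,+,0,\cdot,1)$ has $(\mathfrak S,+,0)$ a commutative monoid, $(\mathfrak S,\cdot,1)$ a monoid, $0r=r0=0$, and two-sided distributivity; all semirings are commutative. An ideal is a nonempty proper subset closed under addition and under multiplication by elements of $\mathfrak S$. For an ideal $\mathfrak a$, $\mathfrak a^{\uparrow}=\{\mathfrak x\in\sigma_{\mathfrak S}\mid\mathfrak a\subseteq\mathfrak x\}$; the ideal topology on $\sigma_{\mathfrak S}$ has the sets $\mathfrak a^{\uparrow}$ ($\mathfrak a$ any ideal) as a subbasis of closed sets. A space is sober if every non-empty irreducible closed subset is the closure of a unique point. *)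

theory Defs
  imports "HOL-Analysis.Analysis"
begin

definition sr_ideal :: "'a::comm_semiring_1 set \<Rightarrow> bool" where
  "sr_ideal I \<longleftrightarrow> I \<noteq> {} \<and> I \<noteq> UNIV
     \<and> (\<forall>x\<in>I. \<forall>y\<in>I. x + y \<in> I)
     \<and> (\<forall>r. \<forall>x\<in>I. r * x \<in> I)"

definition up_set :: "'a set set \<Rightarrow> 'a set \<Rightarrow> 'a set set" where
  "up_set \<sigma> a = {x \<in> \<sigma>. a \<subseteq> x}"

text \<open>Ideal topology on sigma: the sets up_set sigma a (a any ideal) form a subbasis
  of closed sets; equivalently their complements in sigma (together with sigma itself)
  form a subbasis of open sets.\<close>
definition ideal_topology :: "'a::comm_semiring_1 set set \<Rightarrow> 'a set topology" where
  "ideal_topology \<sigma> =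
     topology_generated_by (insert \<sigma> {\<sigma> - up_set \<sigma> a | a. sr_ideal a})"

definition irreducible_in :: "'b topology \<Rightarrow> 'b set \<Rightarrow> bool" where
  "irreducible_in X A \<longleftrightarrow> A \<subseteq> topspace X \<and> A \<noteq> {} \<and>
     (\<forall>F1 F2. closedin X F1 \<and> closedin X F2 \<and> A \<subseteq> F1 \<union> F2 \<longrightarrow> A \<subseteq> F1 \<or> A \<subseteq> F2)"

definition sober :: "'b topology \<Rightarrow> bool" where
  "sober X \<longleftrightarrow> (\<forall>C. closedin X C \<and> C \<noteq> {} \<and> irreducible_in X C \<longrightarrow>
     (\<exists>!x. x \<in> topspace X \<and> C = X closure_of {x}))"

end

theory Submission
  imports Defs
begin

lemma topspace_it: "topspace (ideal_topology \<sigma>) = \<sigma>"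
  unfolding ideal_topology_def up_set_def by auto

lemma openin_it_iff: "openin (ideal_topology \<sigma>) U \<longleftrightarrow>
   generate_topology_on (insert \<sigma> {\<sigma> - up_set \<sigma> a | a. sr_ideal a}) U"
  unfolding ideal_topology_def by (rule openin_topology_generated_by_iff)

lemma closed_up: "sr_ideal a \<Longrightarrow> closedin (ideal_topology \<sigma>) (up_set \<sigma> a)"
  unfolding closedin_def topspace_it openin_it_iff
  by (auto simp: up_set_def intro!: generate_topology_on.Basis)

lemma ideal_zero: "sr_ideal a \<Longrightarrow> 0 \<in> a"
  unfolding sr_ideal_def by (metis ex_in_conv mult_zero_left)

lemma Inter_ideal:
  assumes "C \<noteq> {}" "\<forall>x\<in>C. sr_ideal x"
  shows "sr_ideal (\<Inter>C)"
proof -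
  obtain c where c: "c \<in> C" using assms by auto
  have "\<Inter>C \<noteq> UNIV" using c assms(2) unfolding sr_ideal_def by auto
  moreover have "0 \<in> \<Inter>C" using assms(2) ideal_zero by auto
  ultimately show ?thesis using assms(2) unfolding sr_ideal_def by auto
qed

lemma gen_up_closed:
  assumes "generate_topology_on (insert \<sigma> {\<sigma> - up_set \<sigma> a | a. sr_ideal a}) U"
  shows "\<forall>x z. x \<in> \<sigma> \<longrightarrow> x \<subseteq> z \<longrightarrow> z \<in> U \<longrightarrow> x \<in> U"
  using assms
proof (induction rule: generate_topology_on.induct)
  case (UN K) then show ?case by blast
next
  case (Basis s) then show ?case by (auto simp: up_set_def)
qed auto

lemma closure_pt:
  assumes "\<forall>x\<in>\<sigma>. sr_ideal x" "x \<in> \<sigma>"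
  shows "ideal_topology \<sigma> closure_of {x} = up_set \<sigma> x"
proof
  show "ideal_topology \<sigma> closure_of {x} \<subseteq> up_set \<sigma> x"
    by (rule closure_of_minimal) (use assms closed_up in \<open>auto simp: up_set_def\<close>)
next
  show "up_set \<sigma> x \<subseteq> ideal_topology \<sigma> closure_of {x}"
  proof
    fix z assume z: "z \<in> up_set \<sigma> x"
    show "z \<in> ideal_topology \<sigma> closure_of {x}"
      unfolding closure_of_def topspace_it
    proof (safe)
      show "z \<in> \<sigma>" using z by (auto simp: up_set_def)
    next
      fix T assume "z \<in> T" "openin (ideal_topology \<sigma>) T"
      then show "\<exists>y\<in>{x}. y \<in> T"
        using gen_up_closed[of \<sigma> T] z assms(2) unfolding openin_it_iff up_set_def by auto
    qed
  qed
qed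

definition good where
  "good \<sigma> C W \<longleftrightarrow> openin (ideal_topology \<sigma>) W \<and>
     (\<forall>y\<in>W. C \<inter> W = {} \<longrightarrow> (\<exists>a. sr_ideal a \<and> C \<subseteq> up_set \<sigma> a \<and> y \<notin> up_set \<sigma> a))"

lemma gen_good:
  assumes irr: "irreducible_in (ideal_topology \<sigma>) C"
  and "generate_topology_on (insert \<sigma> {\<sigma> - up_set \<sigma> a | a. sr_ideal a}) U"
  shows "\<forall>y\<in>U. \<exists>W. good \<sigma> C W \<and> y \<in> W \<and> W \<subseteq> U"
  using assms(2)
proof (induction rule: generate_topology_on.induct)
  case Empty then show ?case by auto
next
  case (UN K) then show ?case by blast
next
  case (Basis s)
  have o: "openin (ideal_topology \<sigma>) s" unfolding openin_it_iff
    using Basis.hyps by (rule generate_topology_on.Basis)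
  have Cs: "C \<subseteq> \<sigma>" "C \<noteq> {}" using irr unfolding irreducible_in_def topspace_it by auto
  have "good \<sigma> C s"
  proof (cases "s = \<sigma>")
    case True then show ?thesis using o Cs unfolding good_def by auto
  next
    case False
    then obtain a where a: "sr_ideal a" "s = \<sigma> - up_set \<sigma> a" using Basis.hyps by auto
    have "C \<inter> s = {} \<Longrightarrow> C \<subseteq> up_set \<sigma> a" using a(2) Cs(1) by auto
    moreover have "y \<in> s \<Longrightarrow> y \<notin> up_set \<sigma> a" for y using a(2) by auto
    ultimately show ?thesis unfolding good_def using o a(1) by blast
  qed
  then show ?case by auto
next
  case (Int a b)
  show ?case
  proof
    fix y assume "y \<in> a \<inter> b"
    then obtain W1 W2 where w: "good \<sigma> C W1" "y \<in> W1" "W1 \<subseteq> a" "good \<sigma> C W2" "y \<in> W2" "W2 \<subseteq> b"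
      using Int.IH by blast
    have "good \<sigma> C (W1 \<inter> W2)"
      unfolding good_def
    proof (intro conjI ballI impI)
      show "openin (ideal_topology \<sigma>) (W1 \<inter> W2)" using w unfolding good_def by auto
    next
      fix z assume z: "z \<in> W1 \<inter> W2" and e: "C \<inter> (W1 \<inter> W2) = {}"
      have o1: "openin (ideal_topology \<sigma>) W1" and o2: "openin (ideal_topology \<sigma>) W2"
        using w unfolding good_def by auto
      have c1: "closedin (ideal_topology \<sigma>) (\<sigma> - W1)"
        using closedin_diff[OF closedin_topspace o1] unfolding topspace_it .
      have c2: "closedin (ideal_topology \<sigma>) (\<sigma> - W2)"
        using closedin_diff[OF closedin_topspace o2] unfolding topspace_it .
      have "C \<subseteq> \<sigma>" using irr unfolding irreducible_in_def topspace_it by auto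
      then have cu: "C \<subseteq> (\<sigma> - W1) \<union> (\<sigma> - W2)" using e by auto
      have "\<forall>F1 F2. closedin (ideal_topology \<sigma>) F1 \<and> closedin (ideal_topology \<sigma>) F2 \<and> C \<subseteq> F1 \<union> F2 \<longrightarrow> C \<subseteq> F1 \<or> C \<subseteq> F2"
        using irr unfolding irreducible_in_def by blast
      then have "C \<subseteq> \<sigma> - W1 \<or> C \<subseteq> \<sigma> - W2" using c1 c2 cu by blast
      then show "\<exists>a. sr_ideal a \<and> C \<subseteq> up_set \<sigma> a \<and> z \<notin> up_set \<sigma> a"
      proof
        assume "C \<subseteq> \<sigma> - W1"
        then have "C \<inter> W1 = {}" by auto
        then show ?thesis using w(1) z unfolding good_def by blast
      next
        assume "C \<subseteq> \<sigma> - W2"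
        then have "C \<inter> W2 = {}" by auto
        then show ?thesis using w(4) z unfolding good_def by blast
      qed
    qed
    then show "\<exists>W. good \<sigma> C W \<and> y \<in> W \<and> W \<subseteq> a \<inter> b" using w by blast
  qed
qed

theorem theorem3p9:
  fixes \<sigma> :: "'a::comm_semiring_1 set set"
  assumes "\<forall>x\<in>\<sigma>. sr_ideal x"
  shows "sober (ideal_topology \<sigma>) \<longleftrightarrow>
    (\<forall>a. sr_ideal a \<and> up_set \<sigma> a \<noteq> {} \<and> irreducible_in (ideal_topology \<sigma>) (up_set \<sigma> a)
         \<longrightarrow> \<Inter>{x \<in> \<sigma>. a \<subseteq> x} \<in> \<sigma>)"
proof
  assume s: "sober (ideal_topology \<sigma>)"
  show "\<forall>a. sr_ideal a \<and> up_set \<sigma> a \<noteq> {} \<and> irreducible_in (ideal_topology \<sigma>) (up_set \<sigma> a)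
         \<longrightarrow> \<Inter>{x \<in> \<sigma>. a \<subseteq> x} \<in> \<sigma>"
  proof (intro allI impI)
    fix a assume a: "sr_ideal a \<and> up_set \<sigma> a \<noteq> {} \<and> irreducible_in (ideal_topology \<sigma>) (up_set \<sigma> a)"
    then obtain x where x: "x \<in> \<sigma>" "up_set \<sigma> a = ideal_topology \<sigma> closure_of {x}"
    proof -
      have "closedin (ideal_topology \<sigma>) (up_set \<sigma> a)" using a closed_up by blast
      then have "\<exists>!x. x \<in> \<sigma> \<and> up_set \<sigma> a = ideal_topology \<sigma> closure_of {x}"
        using s a unfolding sober_def topspace_it by blast
      then show ?thesis using that by blast
    qed
    then have e: "up_set \<sigma> a = up_set \<sigma> x" using closure_pt[OF assms x(1)] by simp
    have "\<Inter>(up_set \<sigma> x) = x" using x(1) by (auto simp: up_set_def)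
    then show "\<Inter>{x \<in> \<sigma>. a \<subseteq> x} \<in> \<sigma>" using e x(1) by (simp add: up_set_def)
  qed
next
  assume h: "\<forall>a. sr_ideal a \<and> up_set \<sigma> a \<noteq> {} \<and> irreducible_in (ideal_topology \<sigma>) (up_set \<sigma> a)
         \<longrightarrow> \<Inter>{x \<in> \<sigma>. a \<subseteq> x} \<in> \<sigma>"
  show "sober (ideal_topology \<sigma>)"
    unfolding sober_def topspace_it
  proof (intro allI impI)
    fix C assume C: "closedin (ideal_topology \<sigma>) C \<and> C \<noteq> {} \<and> irreducible_in (ideal_topology \<sigma>) C"
    have Cs: "C \<subseteq> \<sigma>" using C closedin_subset[of "ideal_topology \<sigma>" C] unfolding topspace_it by blast
    define b where "b = \<Inter>C"
    have bi: "sr_ideal b" unfolding b_def using Inter_ideal C Cs assms by blast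
    have sub: "C \<subseteq> up_set \<sigma> b" using Cs unfolding b_def up_set_def by auto
    have sup: "up_set \<sigma> b \<subseteq> C"
    proof
      fix y assume y: "y \<in> up_set \<sigma> b"
      show "y \<in> C"
      proof (rule ccontr)
        assume "y \<notin> C"
        then have yU: "y \<in> \<sigma> - C" using y by (auto simp: up_set_def)
        have "openin (ideal_topology \<sigma>) (\<sigma> - C)" using C unfolding closedin_def topspace_it by blast
        then obtain W where W: "good \<sigma> C W" "y \<in> W" "W \<subseteq> \<sigma> - C"
          using gen_good[of \<sigma> C "\<sigma> - C"] C yU unfolding openin_it_iff by blast
        then have "C \<inter> W = {}" by auto
        then obtain a where a: "sr_ideal a" "C \<subseteq> up_set \<sigma> a" "y \<notin> up_set \<sigma> a"
          using W unfolding good_def by blast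
        have "a \<subseteq> b" using a(2) unfolding b_def up_set_def by auto
        then show False using a(3) y unfolding up_set_def by auto
      qed
    qed
    have Ceq: "C = up_set \<sigma> b" using sub sup by auto
    have hb: "sr_ideal b \<and> up_set \<sigma> b \<noteq> {} \<and> irreducible_in (ideal_topology \<sigma>) (up_set \<sigma> b)
         \<longrightarrow> \<Inter>{x \<in> \<sigma>. b \<subseteq> x} \<in> \<sigma>" using h by (rule spec)
    have "up_set \<sigma> b \<noteq> {} \<and> irreducible_in (ideal_topology \<sigma>) (up_set \<sigma> b)"
      using C unfolding Ceq by blast
    then have "\<Inter>{x \<in> \<sigma>. b \<subseteq> x} \<in> \<sigma>" using hb bi by blast
    moreover have "{x \<in> \<sigma>. b \<subseteq> x} = C" using Ceq unfolding up_set_def by simp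
    ultimately have b\<sigma>: "b \<in> \<sigma>" unfolding b_def by simp
    show "\<exists>!x. x \<in> \<sigma> \<and> C = ideal_topology \<sigma> closure_of {x}"
    proof (rule ex1I[of _ b])
      show "b \<in> \<sigma> \<and> C = ideal_topology \<sigma> closure_of {b}" using b\<sigma> Ceq closure_pt[OF assms b\<sigma>] by simp
    next
      fix x assume x: "x \<in> \<sigma> \<and> C = ideal_topology \<sigma> closure_of {x}"
      then have "up_set \<sigma> x = up_set \<sigma> b" using closure_pt[OF assms] Ceq by simp
      then show "x = b" using x b\<sigma> unfolding up_set_def by blast
    qed
  qed
qed

end
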